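(* Let $G$ be a discrete abelian group (written additively), $\alpha\in\mathcal C_c(G,\mathbf k)$, and consider the convolution equation $\sigma(s)=\alpha\star s$, i.e. $s_g^{(t+1)}=\sum_{h\in G}\alpha_h^{(t)}s_{g-h}^{(t)}$. Let $L^{\rm per}$ be the smallest $\sigma$-subring of ${\rm Seq}(\mathbf C)$ containing $\mathbf k$ and all values $s_g^{(t)}$ of solutions $s$ that are $H$-periodic for some subgroup $H$ of finite index in $G$. Then $$L^{\rm per}=\mathbf k\Big[\prod_{\tau=0}^{t-1}\hat\alpha_\theta^{(\tau)} : \theta\in{\rm Tor}(\widehat G)\Big],$$ where for $\theta\in\widehat G$, $\hat\alpha_\theta^{(\tau)}=\sum_{g\in G}\alpha^{(\tau)}_g\theta(g)$ and $\prod_{\tau=0}^{t-1}\hat\alpha^{(\tau)}_\theta$ denotes the sequence indexed by $t$.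
   Context: ${\rm Seq}(\mathbf C)$ is the ring of complex sequences indexed by $t\in\mathbf Z_{\ge0}$ with shift $\sigma(x)^{(t)}=x^{(t+1)}$; $\mathbf k\subseteq{\rm Seq}(\mathbf C)$ is a $\sigma$-stable subring with constants $\mathbf C$; $\mathcal C_c(G,\mathbf k)$ is the set of finitely supported functions $G\to\mathbf k$. A function $s:G\to{\rm Seq}(\mathbf C)$ is $H$-periodic if $s_{g}=s_{g+h}$ for all $g\in G$, $h\in H$. $\widehat G$ is the group of homomorphisms $G\to\mathbf S^1\subset\mathbf C^*$ and ${\rm Tor}(\widehat G)$ its subgroup of finite-order elements. *)

theory Defs
  imports Complex_Main
begin

type_synonym cseq = "nat \<Rightarrow> complex"

definition shift :: "cseq \<Rightarrow> cseq" where
  "shift x = (\<lambda>t. x (Suc t))"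

definition is_subring :: "cseq set \<Rightarrow> bool" where
  "is_subring S \<longleftrightarrow> (\<lambda>_. 0) \<in> S \<and> (\<lambda>_. 1) \<in> S \<and>
     (\<forall>x\<in>S. \<forall>y\<in>S. (\<lambda>t. x t + y t) \<in> S \<and> (\<lambda>t. x t * y t) \<in> S) \<and>
     (\<forall>x\<in>S. (\<lambda>t. - x t) \<in> S)"

definition sigma_stable :: "cseq set \<Rightarrow> bool" where
  "sigma_stable S \<longleftrightarrow> (\<forall>x\<in>S. shift x \<in> S)"

definition base_ring :: "cseq set \<Rightarrow> bool" where
  "base_ring k \<longleftrightarrow> is_subring k \<and> sigma_stable k \<and> (\<forall>c. (\<lambda>_. c) \<in> k)"

text \<open>Subring generated by a set (e.g. k[X] = ring_gen (k \<union> X)).\<close>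
definition ring_gen :: "cseq set \<Rightarrow> cseq set" where
  "ring_gen X = \<Inter>{R. is_subring R \<and> X \<subseteq> R}"

definition sigma_ring_gen :: "cseq set \<Rightarrow> cseq set" where
  "sigma_ring_gen X = \<Inter>{R. is_subring R \<and> sigma_stable R \<and> X \<subseteq> R}"

definition supp :: "('g \<Rightarrow> cseq) \<Rightarrow> 'g set" where
  "supp \<alpha> = {g. \<alpha> g \<noteq> (\<lambda>_. 0)}"

definition Cc :: "cseq set \<Rightarrow> ('g \<Rightarrow> cseq) set" where
  "Cc k = {\<alpha>. finite (supp \<alpha>) \<and> (\<forall>g. \<alpha> g \<in> k)}"

definition is_solution :: "('g::ab_group_add \<Rightarrow> cseq) \<Rightarrow> ('g \<Rightarrow> cseq) \<Rightarrow> bool" where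
  "is_solution \<alpha> s \<longleftrightarrow>
     (\<forall>g t. s g (Suc t) = (\<Sum>h\<in>supp \<alpha>. \<alpha> h t * s (g - h) t))"

definition is_subgroup :: "'g::ab_group_add set \<Rightarrow> bool" where
  "is_subgroup H \<longleftrightarrow> 0 \<in> H \<and> (\<forall>x\<in>H. \<forall>y\<in>H. x + y \<in> H) \<and> (\<forall>x\<in>H. - x \<in> H)"

definition finite_index :: "'g::ab_group_add set \<Rightarrow> bool" where
  "finite_index H \<longleftrightarrow> finite {(\<lambda>h. g + h) ` H | g. True}"

definition periodic :: "'g::ab_group_add set \<Rightarrow> ('g \<Rightarrow> cseq) \<Rightarrow> bool" where
  "periodic H s \<longleftrightarrow> (\<forall>g. \<forall>h\<in>H. s (g + h) = s g)"

definition character :: "('g::ab_group_add \<Rightarrow> complex) \<Rightarrow> bool" where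
  "character \<theta> \<longleftrightarrow> (\<forall>g h. \<theta> (g + h) = \<theta> g * \<theta> h) \<and> (\<forall>g. cmod (\<theta> g) = 1)"

definition torsion_character :: "('g::ab_group_add \<Rightarrow> complex) \<Rightarrow> bool" where
  "torsion_character \<theta> \<longleftrightarrow> character \<theta> \<and> (\<exists>n::nat. n > 0 \<and> (\<forall>g. \<theta> g ^ n = 1))"

definition alpha_hat :: "('g \<Rightarrow> cseq) \<Rightarrow> ('g \<Rightarrow> complex) \<Rightarrow> cseq" where
  "alpha_hat \<alpha> \<theta> = (\<lambda>\<tau>. \<Sum>g\<in>supp \<alpha>. \<alpha> g \<tau> * \<theta> g)"

definition L_per :: "cseq set \<Rightarrow> ('g::ab_group_add \<Rightarrow> cseq) \<Rightarrow> cseq set" where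
  "L_per k \<alpha> = sigma_ring_gen (k \<union>
     {s g | s g. is_solution \<alpha> s \<and> (\<exists>H. is_subgroup H \<and> finite_index H \<and> periodic H s)})"

end

theory Submission
  imports Defs
begin



lemma subring_Inter: "(\<And>R. R \<in> S \<Longrightarrow> is_subring R) \<Longrightarrow> is_subring (\<Inter>S)"
  unfolding is_subring_def by auto

lemma ring_gen_subring: "is_subring (ring_gen X)"
  unfolding ring_gen_def by (rule subring_Inter) auto
lemma ring_gen_sup: "X \<subseteq> ring_gen X"
  unfolding ring_gen_def by auto
lemma ring_gen_min: "is_subring R \<Longrightarrow> X \<subseteq> R \<Longrightarrow> ring_gen X \<subseteq> R"
  unfolding ring_gen_def by auto

lemma sigma_ring_gen_subring: "is_subring (sigma_ring_gen X)"
  unfolding sigma_ring_gen_def by (rule subring_Inter) auto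
lemma sigma_ring_gen_stable: "sigma_stable (sigma_ring_gen X)"
  unfolding sigma_ring_gen_def sigma_stable_def by auto
lemma sigma_ring_gen_sup: "X \<subseteq> sigma_ring_gen X"
  unfolding sigma_ring_gen_def by auto
lemma sigma_ring_gen_min: "is_subring R \<Longrightarrow> sigma_stable R \<Longrightarrow> X \<subseteq> R \<Longrightarrow> sigma_ring_gen X \<subseteq> R"
  unfolding sigma_ring_gen_def by auto

lemma subring_add: "is_subring R \<Longrightarrow> x \<in> R \<Longrightarrow> y \<in> R \<Longrightarrow> (\<lambda>t. x t + y t) \<in> R"
  unfolding is_subring_def by auto
lemma subring_mult: "is_subring R \<Longrightarrow> x \<in> R \<Longrightarrow> y \<in> R \<Longrightarrow> (\<lambda>t. x t * y t) \<in> R"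
  unfolding is_subring_def by auto
lemma subring_zero: "is_subring R \<Longrightarrow> (\<lambda>_. 0) \<in> R"
  unfolding is_subring_def by auto

lemma subring_sum:
  assumes "is_subring R" "finite A" "\<And>a. a \<in> A \<Longrightarrow> f a \<in> R"
  shows "(\<lambda>t. \<Sum>a\<in>A. f a t) \<in> R"
  using assms(2,3)
proof (induction A rule: finite_induct)
  case empty then show ?case using subring_zero[OF assms(1)] by simp
next
  case (insert x F)
  have "(\<lambda>t. f x t + (\<lambda>t. \<Sum>a\<in>F. f a t) t) \<in> R"
    by (rule subring_add[OF assms(1)]) (use insert in auto)
  then show ?case using insert by simp
qed

lemma base_const: "base_ring k \<Longrightarrow> k \<subseteq> R \<Longrightarrow> (\<lambda>_. c) \<in> R"
  unfolding base_ring_def by auto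

lemma char_0: "character \<theta> \<Longrightarrow> \<theta> 0 = 1"
proof -
  assume c: "character \<theta>"
  then have "\<theta> 0 = \<theta> 0 * \<theta> 0" unfolding character_def by (metis add_0)
  moreover have "\<theta> 0 \<noteq> 0" using c unfolding character_def by (metis norm_zero zero_neq_one)
  ultimately show ?thesis by (metis mult_cancel_left1)
qed

lemma char_add: "character \<theta> \<Longrightarrow> \<theta> (a + b) = \<theta> a * \<theta> b"
  unfolding character_def by auto

lemma char_neg: "character \<theta> \<Longrightarrow> \<theta> (-a) * \<theta> a = 1"
  by (metis char_0 char_add add.left_inverse)

lemma char_neg_cnj: "character \<theta> \<Longrightarrow> \<theta> (-a) = cnj (\<theta> a)"
proof -
  assume c: "character \<theta>"
  have n: "cmod (\<theta> a) = 1" using c unfolding character_def by auto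
  have "cnj (\<theta> a) * \<theta> a = 1"
    using n by (metis complex_norm_square mult.commute of_real_1 power_one)
  moreover have "\<theta> a \<noteq> 0" using n by auto
  ultimately show ?thesis using char_neg[OF c, of a] by (metis mult_cancel_right)
qed

definition P :: "('g \<Rightarrow> cseq) \<Rightarrow> ('g \<Rightarrow> complex) \<Rightarrow> cseq" where
  "P \<alpha> \<theta> = (\<lambda>t. \<Prod>\<tau><t. alpha_hat \<alpha> \<theta> \<tau>)"

lemma sol_char:
  fixes \<alpha> :: "'g::ab_group_add \<Rightarrow> cseq"
  assumes "character \<theta>"
  shows "is_solution \<alpha> (\<lambda>x t. c * \<theta> (-x) * P \<alpha> \<theta> t)"
  unfolding is_solution_def
proof (intro allI)
  fix g t
  have "(\<Sum>h\<in>supp \<alpha>. \<alpha> h t * (c * \<theta> (- (g - h)) * P \<alpha> \<theta> t))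
      = (\<Sum>h\<in>supp \<alpha>. (c * \<theta> (-g) * P \<alpha> \<theta> t) * (\<alpha> h t * \<theta> h))"
    by (rule sum.cong) (auto simp: char_add[OF assms, of h "-g" for h, symmetric] algebra_simps)
  also have "\<dots> = c * \<theta> (-g) * P \<alpha> \<theta> t * alpha_hat \<alpha> \<theta> t"
    unfolding alpha_hat_def by (simp add: sum_distrib_left)
  also have "\<dots> = c * \<theta> (-g) * P \<alpha> \<theta> (Suc t)"
    unfolding P_def by simp
  finally show "c * \<theta> (- g) * P \<alpha> \<theta> (Suc t) =
      (\<Sum>h\<in>supp \<alpha>. \<alpha> h t * (c * \<theta> (- (g - h)) * P \<alpha> \<theta> t))" by simp
qed

lemma sol_add: "is_solution \<alpha> s1 \<Longrightarrow> is_solution \<alpha> s2 \<Longrightarrow> is_solution \<alpha> (\<lambda>x t. s1 x t + s2 x t)"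
  unfolding is_solution_def by (simp add: sum.distrib distrib_left)

lemma sol_unique:
  assumes "is_solution \<alpha> s1" "is_solution \<alpha> s2" "\<And>x. s1 x 0 = s2 x 0"
  shows "s1 = s2"
proof -
  have "\<forall>x. s1 x t = s2 x t" for t
  proof (induction t)
    case 0 then show ?case using assms(3) by auto
  next
    case (Suc t) then show ?case using assms(1,2) unfolding is_solution_def by simp
  qed
  then show ?thesis by auto
qed




fun nmul :: "nat \<Rightarrow> 'g::ab_group_add \<Rightarrow> 'g" where
  "nmul 0 g = 0" | "nmul (Suc m) g = g + nmul m g"

lemma nmul_add: "nmul (m + m') g = nmul m g + nmul m' g"
  by (induct m) (auto simp: add.assoc)
lemma nmul_mult: "nmul (m * m') g = nmul m (nmul m' g)"
  by (induct m) (auto simp: nmul_add)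
lemma nmul_1[simp]: "nmul 1 g = g" by simp

lemma sg_zero: "is_subgroup B \<Longrightarrow> 0 \<in> B" unfolding is_subgroup_def by auto
lemma sg_add: "is_subgroup B \<Longrightarrow> x \<in> B \<Longrightarrow> y \<in> B \<Longrightarrow> x + y \<in> B" unfolding is_subgroup_def by auto
lemma sg_neg: "is_subgroup B \<Longrightarrow> x \<in> B \<Longrightarrow> - x \<in> B" unfolding is_subgroup_def by auto
lemma sg_diff: "is_subgroup B \<Longrightarrow> x \<in> B \<Longrightarrow> y \<in> B \<Longrightarrow> x - y \<in> B"
  by (metis diff_conv_add_uminus sg_add sg_neg)
lemma sg_nmul: "is_subgroup B \<Longrightarrow> x \<in> B \<Longrightarrow> nmul m x \<in> B"
  by (induct m) (auto intro: sg_add sg_zero)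

definition ext :: "'g::ab_group_add set \<Rightarrow> 'g \<Rightarrow> 'g set" where
  "ext B a = {b + nmul m a | b m. b \<in> B}"

definition tors :: "'g::ab_group_add set \<Rightarrow> bool" where
  "tors B \<longleftrightarrow> (\<forall>a. \<exists>n>0. nmul n a \<in> B)"

lemma ext_sub: "is_subgroup B \<Longrightarrow> B \<subseteq> ext B a"
proof
  fix x assume "x \<in> B" then have "x = x + nmul 0 a" "x \<in> B" by auto
  then show "x \<in> ext B a" unfolding ext_def by blast
qed
lemma ext_a: "is_subgroup B \<Longrightarrow> a \<in> ext B a"
proof -
  assume "is_subgroup B" then have "a = 0 + nmul 1 a" "0 \<in> B" using sg_zero by auto
  then show ?thesis unfolding ext_def by blast
qed

lemma ext_subgroup:
  assumes sg: "is_subgroup B" and t: "tors B"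
  shows "is_subgroup (ext B a)"
proof -
  obtain n where n: "n > 0" "nmul n a \<in> B" using t unfolding tors_def by blast
  have z: "0 \<in> ext B a" using ext_sub[OF sg] sg_zero[OF sg] by auto
  have ad: "x + y \<in> ext B a" if xy: "x \<in> ext B a" "y \<in> ext B a" for x y
  proof -
    obtain b m where "b \<in> B" "x = b + nmul m a"
      using xy(1) unfolding ext_def by auto
    moreover obtain b' m' where "b' \<in> B" "y = b' + nmul m' a"
      using xy(2) unfolding ext_def by auto
    ultimately
    have "x + y = (b + b') + nmul (m + m') a" "b + b' \<in> B"
      by (auto simp: nmul_add algebra_simps intro: sg_add[OF sg])
    then show ?thesis unfolding ext_def by blast
  qed
  have ng: "- x \<in> ext B a" if xx: "x \<in> ext B a" for x
  proof -
    obtain b m where bm: "b \<in> B" "x = b + nmul m a"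
      using xx unfolding ext_def by auto
    have e: "nmul (m * n) a = nmul ((n - 1) * m) a + nmul m a"
      using n(1) by (metis Suc_diff_1 add.commute mult.commute mult_Suc nmul_add)
    have "nmul (m * n) a \<in> B" using n by (simp add: nmul_mult sg_nmul[OF sg])
    then have "- b - nmul (m * n) a \<in> B" using bm by (intro sg_diff[OF sg] sg_neg[OF sg])
    moreover have "- x = (- b - nmul (m * n) a) + nmul ((n - 1) * m) a"
      using bm e by (simp add: algebra_simps)
    ultimately show ?thesis unfolding ext_def by blast
  qed
  show ?thesis using z ad ng unfolding is_subgroup_def by blast
qed

lemma tors_mono: "tors B \<Longrightarrow> B \<subseteq> B' \<Longrightarrow> tors B'"
  unfolding tors_def by blast

fun KB :: "'g::ab_group_add set \<Rightarrow> 'g list \<Rightarrow> 'g set" where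
  "KB B [] = B" | "KB B (g # gs) = KB (ext B g) gs"

lemma KB_props:
  "is_subgroup B \<Longrightarrow> tors B \<Longrightarrow> is_subgroup (KB B gs) \<and> B \<subseteq> KB B gs \<and> set gs \<subseteq> KB B gs"
proof (induction gs arbitrary: B)
  case Nil then show ?case by simp
next
  case (Cons g gs)
  have "is_subgroup (ext B g)" "tors (ext B g)"
    using Cons.prems ext_subgroup tors_mono ext_sub by blast+
  from Cons.IH[OF this] show ?case using ext_sub[OF Cons.prems(1)] ext_a[OF Cons.prems(1), of g]
    by auto
qed

definition pchar :: "'g::ab_group_add set \<Rightarrow> ('g \<Rightarrow> complex) \<Rightarrow> bool" where
  "pchar B \<chi> \<longleftrightarrow> (\<forall>x\<in>B. \<forall>y\<in>B. \<chi> (x + y) = \<chi> x * \<chi> y) \<and> (\<exists>N>0. \<forall>x\<in>B. \<chi> x ^ N = 1)"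

lemma pchar_0: "is_subgroup B \<Longrightarrow> pchar B \<chi> \<Longrightarrow> \<chi> 0 = 1"
proof -
  assume sg: "is_subgroup B" and p: "pchar B \<chi>"
  then obtain N where N: "N > 0" "\<chi> 0 ^ N = 1" unfolding pchar_def using sg_zero by blast
  have "\<chi> 0 = \<chi> 0 * \<chi> 0" using p sg_zero[OF sg] unfolding pchar_def by (metis add_0)
  moreover have "\<chi> 0 \<noteq> 0" using N by (cases "\<chi> 0 = 0") (auto simp: power_0_left)
  ultimately show ?thesis by (metis mult_cancel_left1)
qed

lemma pchar_nmul: "is_subgroup B \<Longrightarrow> pchar B \<chi> \<Longrightarrow> c \<in> B \<Longrightarrow> \<chi> (nmul q c) = \<chi> c ^ q"
proof (induction q)
  case 0 then show ?case using pchar_0 by simp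
next
  case (Suc q)
  then show ?case unfolding pchar_def using sg_nmul[OF Suc.prems(1,3)] by auto
qed




lemma ext_char:
  assumes sg: "is_subgroup B" and pc: "pchar B \<chi>" and n: "n > 0" "nmul n a \<in> B"
    and mn: "\<And>m. 0 < m \<Longrightarrow> m < n \<Longrightarrow> nmul m a \<notin> B"
    and z: "z ^ n = \<chi> (nmul n a)"
  shows "\<exists>\<chi>'. pchar (ext B a) \<chi>' \<and> (\<forall>b\<in>B. \<chi>' b = \<chi> b) \<and> \<chi>' a = z"
proof -
  define dm where "dm x = (SOME m. m < n \<and> x - nmul m a \<in> B)" for x
  have key: "m1 = m2" if "m1 \<le> m2" "m2 < n" "x - nmul m1 a \<in> B" "x - nmul m2 a \<in> B" for m1 m2 x
  proof -
    have "(x - nmul m1 a) - (x - nmul m2 a) \<in> B" using that sg_diff[OF sg] by blast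
    moreover have "(x - nmul m1 a) - (x - nmul m2 a) = nmul (m2 - m1) a"
      using nmul_add[of m1 "m2 - m1" a] that(1) by simp
    ultimately have "nmul (m2 - m1) a \<in> B" by simp
    then show ?thesis using mn[of "m2 - m1"] that by force
  qed
  have uniq: "m1 = m2" if "m1 < n" "m2 < n" "x - nmul m1 a \<in> B" "x - nmul m2 a \<in> B" for x m1 m2
    using key[of m1 m2 x] key[of m2 m1 x] that by (cases "m1 \<le> m2") auto
  have dm: "dm (b + nmul m a) = m mod n \<and> (b + nmul m a) - nmul (m mod n) a = b + nmul (m div n) (nmul n a)"
    if "b \<in> B" for b m
  proof -
    have e: "nmul m a = nmul (m mod n) a + nmul (m div n) (nmul n a)"
      by (metis mod_div_mult_eq nmul_add nmul_mult)
    then have eq: "(b + nmul m a) - nmul (m mod n) a = b + nmul (m div n) (nmul n a)" by simp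
    have inB: "b + nmul (m div n) (nmul n a) \<in> B" using that n sg by (simp add: sg_add sg_nmul)
    have mlt: "m mod n < n" using n(1) by simp
    have ex: "\<exists>m'. m' < n \<and> (b + nmul m a) - nmul m' a \<in> B"
      by (rule exI[of _ "m mod n"]) (simp only: eq inB mlt simp_thms)
    have "dm (b + nmul m a) < n \<and> (b + nmul m a) - nmul (dm (b + nmul m a)) a \<in> B"
      unfolding dm_def by (rule someI_ex[OF ex])
    moreover have mem: "(b + nmul m a) - nmul (m mod n) a \<in> B" by (simp only: eq inB)
    ultimately have "dm (b + nmul m a) = m mod n" using uniq[OF _ mlt _ mem] by blast
    with eq show ?thesis by simp
  qed
  define \<chi>' where "\<chi>' x = \<chi> (x - nmul (dm x) a) * z ^ dm x" for x
  have form: "\<chi>' (b + nmul m a) = \<chi> b * z ^ m" if "b \<in> B" for b m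
  proof -
    have "\<chi>' (b + nmul m a) = \<chi> (b + nmul (m div n) (nmul n a)) * z ^ (m mod n)"
      unfolding \<chi>'_def conjunct1[OF dm[OF that, of m]] conjunct2[OF dm[OF that, of m]] by (rule refl)
    also have "\<chi> (b + nmul (m div n) (nmul n a)) = \<chi> b * \<chi> (nmul n a) ^ (m div n)"
    proof -
      have c: "nmul (m div n) (nmul n a) \<in> B" using sg_nmul[OF sg n(2)] .
      have "\<chi> (b + nmul (m div n) (nmul n a)) = \<chi> b * \<chi> (nmul (m div n) (nmul n a))"
        using pc that c unfolding pchar_def by blast
      then show ?thesis using pchar_nmul[OF sg pc n(2)] by simp
    qed
    also have "\<chi> (nmul n a) ^ (m div n) = z ^ (n * (m div n))" using z by (simp add: power_mult)
    finally have "\<chi>' (b + nmul m a) = \<chi> b * (z ^ (n * (m div n)) * z ^ (m mod n))"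
      by (simp add: mult.assoc)
    also have "z ^ (n * (m div n)) * z ^ (m mod n) = z ^ m"
      by (simp add: power_add[symmetric])
    finally show ?thesis .
  qed
  obtain N where N: "N > 0" "\<forall>x\<in>B. \<chi> x ^ N = 1" using pc unfolding pchar_def by blast
  have mul: "\<chi>' (x + y) = \<chi>' x * \<chi>' y" if xy: "x \<in> ext B a" "y \<in> ext B a" for x y
  proof -
    obtain b m where bm: "b \<in> B" "x = b + nmul m a" using xy(1) unfolding ext_def by auto
    obtain b' m' where bm': "b' \<in> B" "y = b' + nmul m' a" using xy(2) unfolding ext_def by auto
    have "x + y = (b + b') + nmul (m + m') a" using bm bm' by (simp add: nmul_add algebra_simps)
    moreover have "b + b' \<in> B" using bm bm' sg_add[OF sg] by auto
    ultimately have "\<chi>' (x + y) = \<chi> (b + b') * z ^ (m + m')" using form by simp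
    also have "\<dots> = (\<chi> b * z ^ m) * (\<chi> b' * z ^ m')"
      using pc bm bm' unfolding pchar_def by (simp add: power_add)
    finally show ?thesis using form bm bm' by simp
  qed
  have tor: "\<chi>' x ^ (N * n) = 1" if xx: "x \<in> ext B a" for x
  proof -
    obtain b m where bm: "b \<in> B" "x = b + nmul m a" using xx unfolding ext_def by auto
    have "\<chi>' x ^ (N * n) = (\<chi> b ^ N) ^ n * ((z ^ n) ^ N) ^ m"
      using form bm by (simp add: power_mult_distrib power_mult[symmetric] mult_ac)
    also have "\<dots> = 1" using N bm z n(2) by simp
    finally show ?thesis .
  qed
  have agree: "\<chi>' b = \<chi> b" if "b \<in> B" for b
    using form[OF that, of 0] by simp
  have "\<chi>' a = \<chi> 0 * z" using form[OF sg_zero[OF sg], of 1] by simp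
  then have aa: "\<chi>' a = z" using pchar_0[OF sg pc] by simp
  have "pchar (ext B a) \<chi>'" unfolding pchar_def using mul tor N(1) n(1)
    by (intro conjI ballI exI[of _ "N * n"]) auto
  then show ?thesis using agree aa by blast
qed




lemma nth_root_ex:
  fixes c :: complex assumes "c \<noteq> 0" "n > 0" shows "\<exists>z. z ^ n = c"
proof -
  have "card {z::complex. z ^ n = c} = n" by (rule card_nth_roots[OF assms])
  then have "{z::complex. z ^ n = c} \<noteq> {}" using assms(2) by (metis card.empty less_irrefl)
  then show ?thesis by blast
qed

lemma least_mult:
  assumes "tors B"
  obtains n where "n > 0" "nmul n a \<in> B" "\<And>m. 0 < m \<Longrightarrow> m < n \<Longrightarrow> nmul m a \<notin> B"
proof -
  obtain n0 where "n0 > 0" "nmul n0 a \<in> B" using assms unfolding tors_def by blast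
  define n where "n = (LEAST n. 0 < n \<and> nmul n a \<in> B)"
  have "0 < n \<and> nmul n a \<in> B" unfolding n_def by (rule LeastI[of _ n0]) (use \<open>n0 > 0\<close> \<open>nmul n0 a \<in> B\<close> in auto)
  moreover have "nmul m a \<notin> B" if "0 < m" "m < n" for m
    using not_less_Least[of m "\<lambda>n. 0 < n \<and> nmul n a \<in> B"] that unfolding n_def by auto
  ultimately show ?thesis using that by blast
qed

lemma ext_list:
  assumes "is_subgroup B" "tors B" "pchar B \<chi>"
  shows "\<exists>\<chi>'. pchar (KB B gs) \<chi>' \<and> (\<forall>b\<in>B. \<chi>' b = \<chi> b)"
  using assms
proof (induction gs arbitrary: B \<chi>)
  case Nil then show ?case by (intro exI[of _ \<chi>]) simp
next
  case (Cons g gs)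
  obtain n where n: "n > 0" "nmul n g \<in> B" "\<And>m. 0 < m \<Longrightarrow> m < n \<Longrightarrow> nmul m g \<notin> B"
    using least_mult[OF Cons.prems(2)] by blast
  obtain N where N: "N > 0" "\<chi> (nmul n g) ^ N = 1" using Cons.prems(3) n(2) unfolding pchar_def by blast
  have "\<chi> (nmul n g) \<noteq> 0" using N by (cases "\<chi> (nmul n g) = 0") (auto simp: power_0_left)
  then obtain z where z: "z ^ n = \<chi> (nmul n g)" using nth_root_ex n(1) by blast
  obtain \<chi>1 where c1: "pchar (ext B g) \<chi>1" "\<forall>b\<in>B. \<chi>1 b = \<chi> b"
    using ext_char[OF Cons.prems(1,3) n z] by blast
  have "is_subgroup (ext B g)" "tors (ext B g)"
    using Cons.prems ext_subgroup tors_mono ext_sub by blast+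
  from Cons.IH[OF this c1(1)] obtain \<chi>' where "pchar (KB (ext B g) gs) \<chi>'" "\<forall>b\<in>ext B g. \<chi>' b = \<chi>1 b"
    by blast
  then show ?case using c1(2) ext_sub[OF Cons.prems(1), of g] by (intro exI[of _ \<chi>']) (simp add: subset_iff)
qed




lemma tc_char: "torsion_character \<chi> \<Longrightarrow> character \<chi>"
  unfolding torsion_character_def by auto

lemma tc_one: "torsion_character (\<lambda>_. 1)"
  unfolding torsion_character_def character_def by auto

lemma tc_mult:
  assumes "torsion_character \<chi>" "torsion_character \<psi>"
  shows "torsion_character (\<lambda>x. \<chi> x * \<psi> x)"
proof -
  obtain n where n: "n > 0" "\<forall>g. \<chi> g ^ n = 1" using assms(1) unfolding torsion_character_def by blast
  obtain m where m: "m > 0" "\<forall>g. \<psi> g ^ m = 1" using assms(2) unfolding torsion_character_def by blast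
  have "character (\<lambda>x. \<chi> x * \<psi> x)" using assms unfolding torsion_character_def character_def
    by (auto simp: norm_mult)
  moreover have "(\<chi> g * \<psi> g) ^ (n * m) = 1" for g
    using n m by (simp add: power_mult_distrib power_mult) (metis power_mult mult.commute power_one)
  ultimately show ?thesis unfolding torsion_character_def using n m by (intro conjI exI[of _ "n*m"]) auto
qed

lemma tc_pow: "torsion_character \<psi> \<Longrightarrow> torsion_character (\<lambda>x. \<psi> x ^ l)"
proof (induction l)
  case 0 then show ?case using tc_one by simp
next
  case (Suc l)
  have "torsion_character (\<lambda>x. \<psi> x * \<psi> x ^ l)" using tc_mult[OF Suc.prems Suc.IH[OF Suc.prems]] .
  then show ?case by simp
qed

lemma pchar_tc: "pchar UNIV \<chi> \<Longrightarrow> torsion_character \<chi>"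
proof -
  assume p: "pchar UNIV \<chi>"
  then obtain N where N: "N > 0" "\<forall>x. \<chi> x ^ N = 1" unfolding pchar_def by auto
  have "cmod (\<chi> x) = 1" for x using power_eq_1_iff[of "\<chi> x" N] N by auto
  then show ?thesis using p N unfolding torsion_character_def character_def pchar_def by auto
qed

lemma unit_cnj: "cmod z = 1 \<Longrightarrow> cnj z * z = 1"
  by (metis complex_norm_square mult.commute of_real_1 power_one)

inductive_set tspan :: "('g::ab_group_add \<Rightarrow> complex) set" where
  tzero: "(\<lambda>_. 0) \<in> tspan"
| tstep: "torsion_character \<chi> \<Longrightarrow> f \<in> tspan \<Longrightarrow> (\<lambda>x. c * \<chi> x + f x) \<in> tspan"

lemma tspan_add: "f \<in> tspan \<Longrightarrow> g \<in> tspan \<Longrightarrow> (\<lambda>x. f x + g x) \<in> tspan"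
proof (induction f rule: tspan.induct)
  case tzero then show ?case by simp
next
  case (tstep \<chi> f c)
  have "(\<lambda>x. c * \<chi> x + (f x + g x)) \<in> tspan" using tstep by (intro tspan.tstep) auto
  then show ?case by (simp add: add.assoc)
qed

lemma tspan_mult: "f \<in> tspan \<Longrightarrow> torsion_character \<psi> \<Longrightarrow> (\<lambda>x. f x * \<psi> x) \<in> tspan"
proof (induction f rule: tspan.induct)
  case tzero then show ?case by (simp add: tspan.tzero)
next
  case (tstep \<chi> f c)
  have "(\<lambda>x. c * (\<chi> x * \<psi> x) + f x * \<psi> x) \<in> tspan"
    using tstep tc_mult by (intro tspan.tstep) auto
  then show ?case by (simp add: algebra_simps)
qed

lemma tspan_sum: "finite A \<Longrightarrow> (\<And>a. a \<in> A \<Longrightarrow> F a \<in> tspan) \<Longrightarrow> (\<lambda>x. \<Sum>a\<in>A. F a x) \<in> tspan"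
proof (induction A rule: finite_induct)
  case empty then show ?case by (simp add: tspan.tzero)
next
  case (insert a A)
  have "(\<lambda>x. F a x + (\<lambda>x. \<Sum>a\<in>A. F a x) x) \<in> tspan" using insert by (intro tspan_add) auto
  then show ?case using insert by simp
qed

definition cperiodic :: "'g::ab_group_add set \<Rightarrow> ('g \<Rightarrow> complex) \<Rightarrow> bool" where
  "cperiodic B f \<longleftrightarrow> (\<forall>x. \<forall>b\<in>B. f (x + b) = f x)"

lemma root_facts:
  assumes n: "n > 0"
  defines "\<omega> \<equiv> cis (2 * pi / real n)"
  shows "\<omega> ^ n = 1" "cnj \<omega> * \<omega> = 1" "\<And>m. 0 < m \<Longrightarrow> m < n \<Longrightarrow> cnj \<omega> ^ m \<noteq> 1"
proof -
  show "\<omega> ^ n = 1" using n unfolding \<omega>_def by (simp add: DeMoivre)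
  show "cnj \<omega> * \<omega> = 1" unfolding \<omega>_def by (simp add: cis_cnj cis_mult)
  fix m assume m: "0 < m" "m < n"
  have inj: "inj_on (\<lambda>k. cis (2 * pi * real k / real n)) {..<n}"
    using bij_betw_roots_unity[OF n] unfolding bij_betw_def by blast
  have "cis (2 * pi * real m / real n) \<noteq> cis (2 * pi * real 0 / real n)"
    using inj_onD[OF inj, of m 0] m n by auto
  then have "\<omega> ^ m \<noteq> 1" unfolding \<omega>_def by (simp add: DeMoivre mult_ac)
  then show "cnj \<omega> ^ m \<noteq> 1" by (metis complex_cnj_one complex_cnj_power complex_cnj_cnj)
qed

lemma ortho:
  assumes n: "n > 0" and m: "m < n"
  defines "\<omega> \<equiv> cis (2 * pi / real n)"
  shows "(\<Sum>l<n. cnj \<omega> ^ (l * m)) = (if m = 0 then of_nat n else 0)"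
proof (cases "m = 0")
  case True then show ?thesis by simp
next
  case False
  let ?q = "cnj \<omega> ^ m"
  have q1: "?q \<noteq> 1" using root_facts(3)[OF n] False m unfolding \<omega>_def by auto
  have "?q ^ n = cnj (\<omega> ^ n) ^ m" by (simp add: power_mult[symmetric] mult.commute)
  also have "\<dots> = 1" using root_facts(1)[OF n] unfolding \<omega>_def by simp
  finally have qn: "?q ^ n = 1" .
  have "(\<Sum>l<n. cnj \<omega> ^ (l * m)) = (\<Sum>l<n. ?q ^ l)" by (simp add: power_mult[symmetric] mult.commute)
  also have "\<dots> = 0" using geometric_sum[OF q1, of n] qn by simp
  finally show ?thesis using False by simp
qed





lemma fourier_step:
  "\<forall>B. is_subgroup B \<longrightarrow> tors B \<longrightarrow> KB B gs = UNIV \<longrightarrow> (\<forall>f. cperiodic B f \<longrightarrow> f \<in> tspan)"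
proof (induction gs)
  case Nil
  show ?case
  proof (intro allI impI)
    fix B :: "'a set" and f assume "KB B [] = UNIV" "cperiodic B f"
    then have "f x = f 0" for x unfolding cperiodic_def by (metis UNIV_I KB.simps(1) add_0)
    then have fe: "f = (\<lambda>x. f 0 * (\<lambda>_. 1) x + (\<lambda>_. 0) x)" by auto
    have "(\<lambda>x. f 0 * (\<lambda>_. 1) x + (\<lambda>_. 0) x) \<in> tspan"
      by (rule tspan.tstep[OF tc_one tspan.tzero])
    then show "f \<in> tspan" by (subst fe)
  qed
next
  case (Cons g gs)
  show ?case
  proof (intro allI impI)
    fix B :: "'a set" and f
    assume sg: "is_subgroup B" and tB: "tors B" and KU: "KB B (g # gs) = UNIV" and per: "cperiodic B f"
    define B' where "B' = ext B g"
    have sg': "is_subgroup B'" and tB': "tors B'" and KU': "KB B' gs = UNIV"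
      using ext_subgroup[OF sg tB] tors_mono[OF tB ext_sub[OF sg]] KU unfolding B'_def by auto
    have IH: "\<And>h. cperiodic B' h \<Longrightarrow> h \<in> tspan" using Cons.IH sg' tB' KU' by blast
    obtain n where n: "n > 0" "nmul n g \<in> B" "\<And>m. 0 < m \<Longrightarrow> m < n \<Longrightarrow> nmul m g \<notin> B"
      using least_mult[OF tB] by blast
    define \<omega> where "\<omega> = cis (2 * pi / real n)"
    have w1: "\<omega> ^ n = 1" and w2: "cnj \<omega> * \<omega> = 1" using root_facts[OF n(1)] unfolding \<omega>_def by auto
    have p1: "pchar B (\<lambda>_. 1)" unfolding pchar_def by (auto intro: exI[of _ 1])
    obtain \<psi>0 where \<psi>0: "pchar B' \<psi>0" "\<forall>b\<in>B. \<psi>0 b = 1" "\<psi>0 g = \<omega>"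
      using ext_char[OF sg p1 n(1,2) n(3) , of \<omega>] w1 unfolding B'_def by auto
    obtain \<psi> where \<psi>: "pchar (KB B' gs) \<psi>" "\<forall>b\<in>B'. \<psi> b = \<psi>0 b"
      using ext_list[OF sg' tB' \<psi>0(1)] by blast
    have tc: "torsion_character \<psi>" using pchar_tc \<psi>(1) KU' by simp
    have gB': "g \<in> B'" unfolding B'_def by (rule ext_a[OF sg])
    have \<psi>B: "\<psi> b = 1" if bB: "b \<in> B" for b
    proof -
      have "b \<in> B'" using bB ext_sub[OF sg, of g] unfolding B'_def by blast
      then have "\<psi> b = \<psi>0 b" using \<psi>(2) by blast
      then show ?thesis using \<psi>0(2) bB by simp
    qed
    have \<psi>g: "\<psi> g = \<omega>" using \<psi>(2) \<psi>0(3) gB' by auto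
    have \<psi>add: "\<psi> (x + y) = \<psi> x * \<psi> y" for x y using tc unfolding torsion_character_def character_def by auto
    have \<psi>cnj: "cnj (\<psi> x) * \<psi> x = 1" for x
      using tc unfolding torsion_character_def character_def by (auto intro: unit_cnj)
    define \<zeta> where "\<zeta> = cnj \<omega>"
    define fl where "fl l x = (1 / of_nat n) * (\<Sum>m<n. \<zeta> ^ (l * m) * f (x + nmul m g))" for l x
    have fnB: "f (y + nmul n g) = f y" for y using per n(2) unfolding cperiodic_def by blast
    have sum_fl: "f x = (\<Sum>l<n. fl l x)" for x
    proof -
      have "(\<Sum>l<n. fl l x) = (1 / of_nat n) * (\<Sum>l<n. \<Sum>m<n. \<zeta> ^ (l * m) * f (x + nmul m g))"
        unfolding fl_def by (simp add: sum_distrib_left)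
      also have "\<dots> = (1 / of_nat n) * (\<Sum>m<n. \<Sum>l<n. \<zeta> ^ (l * m) * f (x + nmul m g))"
        by (subst sum.swap) (rule refl)
      also have "\<dots> = (1 / of_nat n) * (\<Sum>m<n. (\<Sum>l<n. \<zeta> ^ (l * m)) * f (x + nmul m g))"
        by (simp add: sum_distrib_right)
      also have "\<dots> = (1 / of_nat n) * (\<Sum>m<n. (if m = 0 then of_nat n else 0) * f (x + nmul m g))"
        using ortho[OF n(1)] unfolding \<zeta>_def \<omega>_def by simp
      also have "(\<Sum>m<n. (if m = 0 then of_nat n else 0) * f (x + nmul m g))
          = (\<Sum>m<n. (if m = 0 then of_nat n * f (x + nmul m g) else 0))"
        by (rule sum.cong) auto
      also have "\<dots> = of_nat n * f x" using n(1) by (subst sum.delta) auto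
      also have "(1 / of_nat n) * (of_nat n * f x) = f x" using n(1) by simp
      finally show ?thesis by simp
    qed
    have fl_g: "fl l (x + g) = \<omega> ^ l * fl l x" for l x
    proof -
      define h where "h m = \<zeta> ^ (l * m) * f (x + nmul m g)" for m
      have hn: "h n = h 0"
      proof -
        have "\<zeta> ^ (l * n) = 1" using w1 unfolding \<zeta>_def
          by (metis complex_cnj_one complex_cnj_power power_mult power_one mult.commute)
        then show ?thesis unfolding h_def using fnB[of x] by simp
      qed
      have trm: "\<zeta> ^ (l * m) * f (x + g + nmul m g) = \<omega> ^ l * h (Suc m)" for m
      proof -
        have "\<zeta> ^ (l * m) = \<omega> ^ l * \<zeta> ^ (l * Suc m)"
        proof -
          have "\<omega> ^ l * \<zeta> ^ (l * Suc m) = (\<zeta> * \<omega>) ^ l * \<zeta> ^ (l * m)"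
            by (simp add: power_add power_mult_distrib algebra_simps)
          then show ?thesis using w2 unfolding \<zeta>_def by simp
        qed
        moreover have "x + g + nmul m g = x + nmul (Suc m) g" by (simp add: add.assoc)
        ultimately show ?thesis unfolding h_def by (simp add: add.assoc)
      qed
      have "(\<Sum>m<n. h (Suc m)) = (\<Sum>m<n. h m)"
      proof -
        have "h 0 + (\<Sum>m<n. h (Suc m)) = (\<Sum>m<Suc n. h m)" by (rule sum.lessThan_Suc_shift[symmetric])
        also have "\<dots> = (\<Sum>m<n. h m) + h n" by simp
        finally show ?thesis using hn by simp
      qed
      have "fl l (x + g) = (1 / of_nat n) * (\<Sum>m<n. \<omega> ^ l * h (Suc m))"
        by (simp only: fl_def trm)
      also have "\<dots> = (1 / of_nat n) * (\<omega> ^ l * (\<Sum>m<n. h (Suc m)))"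
        by (simp only: sum_distrib_left)
      also have "\<dots> = (1 / of_nat n) * (\<omega> ^ l * (\<Sum>m<n. h m))"
        by (simp only: \<open>(\<Sum>m<n. h (Suc m)) = (\<Sum>m<n. h m)\<close>)
      also have "\<dots> = \<omega> ^ l * fl l x"
        unfolding fl_def h_def by (simp add: mult_ac)
      finally show ?thesis .
    qed
    have fl_B: "fl l (x + b) = fl l x" if "b \<in> B" for l x b
    proof -
      have "f (x + b + nmul m g) = f (x + nmul m g)" for m
        using per that unfolding cperiodic_def by (metis add.commute add.left_commute)
      then show ?thesis unfolding fl_def by simp
    qed
    define hl where "hl l x = fl l x * cnj (\<psi> x) ^ l" for l x
    have hl_g: "hl l (x + g) = hl l x" for l x
    proof -
      have "hl l (x + g) = fl l x * cnj (\<psi> x) ^ l * (\<omega> * cnj \<omega>) ^ l"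
        unfolding hl_def fl_g \<psi>add \<psi>g by (simp add: power_mult_distrib algebra_simps)
      then show ?thesis using w2 unfolding hl_def by (simp add: mult.commute)
    qed
    have hl_B: "hl l (x + b) = hl l x" if "b \<in> B" for l x b
      unfolding hl_def fl_B[OF that] \<psi>add \<psi>B[OF that] by simp
    have hl_m: "hl l (x + nmul m g) = hl l x" for l x m
    proof (induction m arbitrary: x)
      case 0 then show ?case by simp
    next
      case (Suc m)
      have "hl l (x + nmul (Suc m) g) = hl l ((x + nmul m g) + g)" by (simp add: algebra_simps)
      then show ?case using hl_g Suc by simp
    qed
    have hper: "cperiodic B' (hl l)" for l
      unfolding cperiodic_def
    proof (intro allI ballI)
      fix x y assume "y \<in> B'"
      then obtain b m where bm: "b \<in> B" "y = b + nmul m g" unfolding B'_def ext_def by auto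
      have "hl l (x + y) = hl l ((x + nmul m g) + b)" using bm by (simp add: algebra_simps)
      also have "\<dots> = hl l x" using hl_B[OF bm(1)] hl_m by simp
      finally show "hl l (x + y) = hl l x" .
    qed
    have fl_hl: "fl l x = hl l x * \<psi> x ^ l" for l x
    proof -
      have "hl l x * \<psi> x ^ l = fl l x * (cnj (\<psi> x) * \<psi> x) ^ l"
        unfolding hl_def by (simp add: power_mult_distrib)
      then show ?thesis using \<psi>cnj by simp
    qed
    have "(\<lambda>x. \<Sum>l<n. hl l x * \<psi> x ^ l) \<in> tspan"
    proof (rule tspan_sum)
      fix l
      show "(\<lambda>x. hl l x * \<psi> x ^ l) \<in> tspan"
        using tspan_mult[OF IH[OF hper[of l]] tc_pow[OF tc, of l]] .
    qed simp
    moreover have "f = (\<lambda>x. \<Sum>l<n. hl l x * \<psi> x ^ l)"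
      using sum_fl fl_hl by auto
    ultimately show "f \<in> tspan" by simp
  qed
qed




lemma tors_fi:
  assumes sg: "is_subgroup H" and fi: "finite_index H"
  shows "tors H"
  unfolding tors_def
proof
  fix a :: 'a
  define c where "c m = (\<lambda>h. nmul m a + h) ` H" for m
  have "range c \<subseteq> {(\<lambda>h. g + h) ` H | g. True}" unfolding c_def by blast
  then have fr: "finite (range c)" using fi unfolding finite_index_def by (rule finite_subset)
  have "\<not> inj c"
  proof
    assume "inj c"
    then have "finite (UNIV :: nat set)" using finite_imageD[OF fr] by blast
    then show False by simp
  qed
  then obtain m1 m2 where m12: "m1 \<noteq> m2" "c m1 = c m2" unfolding inj_def by blast
  have key: "\<exists>n>0. nmul n a \<in> H" if pq: "p < q" "c p = c q" for p q
  proof -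
    have "nmul p a = nmul p a + 0" by simp
    then have "nmul p a \<in> c p" unfolding c_def using sg_zero[OF sg] by blast
    then obtain h where h: "h \<in> H" "nmul p a = nmul q a + h" using pq(2) unfolding c_def by auto
    have "nmul q a = nmul p a + nmul (q - p) a" using nmul_add[of p "q - p" a] pq(1) by simp
    then have "nmul (q - p) a = - h" using h(2) by (simp add: algebra_simps eq_neg_iff_add_eq_0)
    then have "nmul (q - p) a \<in> H" using sg_neg[OF sg h(1)] by simp
    then show ?thesis using pq(1) by (intro exI[of _ "q - p"]) auto
  qed
  show "\<exists>n>0. nmul n a \<in> H"
  proof (cases "m1 < m2")
    case True then show ?thesis using key m12 by blast
  next
    case False then have "m2 < m1" using m12 by simp
    show ?thesis using key[OF \<open>m2 < m1\<close> m12(2)[symmetric]] .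
  qed
qed

lemma fi_KB:
  assumes sg: "is_subgroup H" and fi: "finite_index H"
  shows "\<exists>gs. KB H gs = UNIV"
proof -
  define C where "C = {(\<lambda>h. g + h) ` H | g. True}"
  have fC: "finite C" using fi unfolding finite_index_def C_def .
  define r where "r c = (SOME g. c = (\<lambda>h. g + h) ` H)" for c
  have "\<exists>gs. set gs = r ` C" by (rule finite_list[OF finite_imageI[OF fC]])
  then obtain gs where gs: "set gs = r ` C" ..
  have t: "tors H" using tors_fi[OF sg fi] .
  note K = KB_props[OF sg t, of gs]
  have "x \<in> KB H gs" for x
  proof -
    define c where "c = (\<lambda>h. x + h) ` H"
    have cC: "c \<in> C" unfolding C_def c_def by (rule CollectI, rule exI[of _ x]) simp
    have "\<exists>g. c = (\<lambda>h. g + h) ` H" unfolding c_def by (rule exI[of _ x]) (rule refl)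
    then have rc: "c = (\<lambda>h. r c + h) ` H" unfolding r_def by (rule someI_ex)
    define g0 where "g0 = r c"
    have rc0: "c = (\<lambda>h. g0 + h) ` H" using rc unfolding g0_def .
    have "x \<in> c" unfolding c_def by (rule image_eqI[of _ _ 0]) (simp_all add: sg_zero[OF sg])
    then have "x \<in> (\<lambda>h. g0 + h) ` H" using rc0 by simp
    then obtain h where h: "h \<in> H" "x = g0 + h" by auto
    have "g0 \<in> set gs" unfolding gs g0_def using cC by (rule imageI)
    then have "g0 \<in> KB H gs" by (rule subsetD[OF conjunct2[OF conjunct2[OF K]]])
    moreover have "h \<in> KB H gs" using h(1) by (rule subsetD[OF conjunct1[OF conjunct2[OF K]]])
    ultimately have "g0 + h \<in> KB H gs" by (rule sg_add[OF conjunct1[OF K]])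
    then show ?thesis using h(2) by simp
  qed
  then show ?thesis by blast
qed

lemma fourier:
  assumes sg: "is_subgroup H" and fi: "finite_index H" and per: "cperiodic H f"
  shows "f \<in> tspan"
proof -
  obtain gs where "KB H gs = UNIV" using fi_KB[OF sg fi] by blast
  then show ?thesis using fourier_step[of gs] sg tors_fi[OF sg fi] per by blast
qed




lemma tc_neg: "torsion_character \<chi> \<Longrightarrow> torsion_character (\<lambda>y. \<chi> (- y))"
proof -
  assume tc: "torsion_character \<chi>"
  then obtain n where n: "n > 0" "\<forall>g. \<chi> g ^ n = 1" unfolding torsion_character_def by blast
  have "\<chi> (- (a + b)) = \<chi> (- a) * \<chi> (- b)" for a b
    using char_add[OF tc_char[OF tc], of "-a" "-b"] by (simp add: add.commute)
  then show ?thesis using tc n unfolding torsion_character_def character_def by auto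
qed

lemma sol_from_tspan:
  fixes \<alpha> :: "'g::ab_group_add \<Rightarrow> cseq"
  assumes R: "is_subring R" and kR: "k \<subseteq> R" and bk: "base_ring k"
    and PR: "\<And>\<theta>. torsion_character \<theta> \<Longrightarrow> P \<alpha> \<theta> \<in> R"
  shows "f \<in> tspan \<Longrightarrow> \<exists>s'. is_solution \<alpha> s' \<and> (\<forall>x. s' x 0 = f x) \<and> (\<forall>x. s' x \<in> R)"
proof (induction f rule: tspan.induct)
  case tzero
  have "is_solution \<alpha> (\<lambda>x t. 0)" unfolding is_solution_def by simp
  then show ?case using subring_zero[OF R] by (intro exI[of _ "\<lambda>x t. 0"]) auto
next
  case (tstep \<chi> f c)
  then obtain s' where s': "is_solution \<alpha> s'" "\<forall>x. s' x 0 = f x" "\<forall>x. s' x \<in> R" by blast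
  define \<theta> where "\<theta> = (\<lambda>y. \<chi> (- y))"
  have tc: "torsion_character \<theta>" unfolding \<theta>_def by (rule tc_neg[OF tstep(1)])
  define s'' where "s'' = (\<lambda>x t. c * \<theta> (- x) * P \<alpha> \<theta> t + s' x t)"
  have "is_solution \<alpha> s''" unfolding s''_def
    by (rule sol_add[OF sol_char[OF tc_char[OF tc]] s'(1)])
  moreover have "s'' x 0 = c * \<chi> x + f x" for x
    unfolding s''_def \<theta>_def P_def using s'(2) by simp
  moreover have "s'' x \<in> R" for x
  proof -
    have "(\<lambda>t. (\<lambda>_. c * \<theta> (- x)) t * P \<alpha> \<theta> t) \<in> R"
      by (rule subring_mult[OF R base_const[OF bk kR] PR[OF tc]])
    then have "(\<lambda>t. (\<lambda>t. (\<lambda>_. c * \<theta> (- x)) t * P \<alpha> \<theta> t) t + s' x t) \<in> R"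
      using s'(3) by (intro subring_add[OF R]) auto
    then show ?thesis unfolding s''_def by simp
  qed
  ultimately show ?case by blast
qed

lemma shift_add: "shift (\<lambda>t. x t + y t) = (\<lambda>t. shift x t + shift y t)" unfolding shift_def by simp
lemma shift_mult: "shift (\<lambda>t. x t * y t) = (\<lambda>t. shift x t * shift y t)" unfolding shift_def by simp
lemma shift_neg: "shift (\<lambda>t. - x t) = (\<lambda>t. - shift x t)" unfolding shift_def by simp
lemma shift_const: "shift (\<lambda>_. c) = (\<lambda>_. c)" unfolding shift_def by simp

theorem theorem2p9:
  fixes k :: "cseq set" and \<alpha> :: "'g::ab_group_add \<Rightarrow> cseq"
  assumes "base_ring k"
    and "\<alpha> \<in> Cc k"
  shows "L_per k \<alpha> = ring_gen (k \<union>
           {(\<lambda>t. \<Prod>\<tau><t. alpha_hat \<alpha> \<theta> \<tau>) | \<theta>. torsion_character \<theta>})"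
proof -
  note bk = assms(1)
  have ksr: "is_subring k" and kst: "sigma_stable k" using bk unfolding base_ring_def by auto
  have fs: "finite (supp \<alpha>)" and \<alpha>k: "\<And>g. \<alpha> g \<in> k" using assms(2) unfolding Cc_def by auto
  define Ps where "Ps = {(\<lambda>t. \<Prod>\<tau><t. alpha_hat \<alpha> \<theta> \<tau>) | \<theta>. torsion_character \<theta>}"
  have Ps_P: "Ps = {P \<alpha> \<theta> | \<theta>. torsion_character \<theta>}" unfolding Ps_def P_def by simp
  define R where "R = ring_gen (k \<union> Ps)"
  have Rsr: "is_subring R" unfolding R_def by (rule ring_gen_subring)
  have kR: "k \<subseteq> R" and PsR: "Ps \<subseteq> R" unfolding R_def using ring_gen_sup[of "k \<union> Ps"] by auto
  have PR: "P \<alpha> \<theta> \<in> R" if "torsion_character \<theta>" for \<theta> using PsR that unfolding Ps_P by blast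
  have ahk: "alpha_hat \<alpha> \<theta> \<in> k" for \<theta>
  proof -
    have "(\<lambda>\<tau>. \<Sum>g\<in>supp \<alpha>. (\<lambda>t. \<alpha> g t * (\<lambda>_. \<theta> g) t) \<tau>) \<in> k"
      by (rule subring_sum[OF ksr fs]) (rule subring_mult[OF ksr \<alpha>k base_const[OF bk subset_refl]])
    then show ?thesis unfolding alpha_hat_def by simp
  qed
  define Sols where "Sols = {s g | s g. is_solution \<alpha> s \<and> (\<exists>H. is_subgroup H \<and> finite_index H \<and> periodic H s)}"
  have Lper: "L_per k \<alpha> = sigma_ring_gen (k \<union> Sols)" unfolding L_per_def Sols_def ..
  have Rst: "sigma_stable R"
  proof -
    define R' where "R' = {x \<in> R. shift x \<in> R}"
    have "is_subring R'" unfolding is_subring_def R'_def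
      using Rsr unfolding is_subring_def by (simp add: shift_add shift_mult shift_neg shift_const)
    moreover have "k \<union> Ps \<subseteq> R'"
    proof
      fix x assume "x \<in> k \<union> Ps"
      then show "x \<in> R'"
      proof
        assume "x \<in> k" then show ?thesis using kR kst unfolding R'_def sigma_stable_def by auto
      next
        assume "x \<in> Ps"
        then obtain \<theta> where x: "x = P \<alpha> \<theta>" "torsion_character \<theta>" unfolding Ps_P by blast
        have "shift x = (\<lambda>t. P \<alpha> \<theta> t * alpha_hat \<alpha> \<theta> t)" unfolding x shift_def P_def by simp
        moreover have "(\<lambda>t. P \<alpha> \<theta> t * alpha_hat \<alpha> \<theta> t) \<in> R"
          by (rule subring_mult[OF Rsr PR[OF x(2)]]) (use ahk kR in blast)
        ultimately show ?thesis using PR[OF x(2)] x(1) unfolding R'_def by simp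
      qed
    qed
    ultimately have "R \<subseteq> R'" unfolding R_def by (rule ring_gen_min)
    then show ?thesis unfolding R'_def sigma_stable_def by auto
  qed
  have SolsR: "Sols \<subseteq> R"
  proof
    fix y assume "y \<in> Sols"
    then obtain s g H where y: "y = s g" and sol: "is_solution \<alpha> s" and sg: "is_subgroup H"
      and fi: "finite_index H" and per: "periodic H s" unfolding Sols_def by blast
    define f where "f x = s x 0" for x
    have "cperiodic H f" using per unfolding cperiodic_def periodic_def f_def by simp
    then have "f \<in> tspan" by (rule fourier[OF sg fi])
    then obtain s' where s': "is_solution \<alpha> s'" "\<forall>x. s' x 0 = f x" "\<forall>x. s' x \<in> R"
      using sol_from_tspan[OF Rsr kR bk PR] by blast
    have "s = s'" by (rule sol_unique[OF sol s'(1)]) (simp add: s'(2) f_def)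
    then show "y \<in> R" using y s'(3) by simp
  qed
  have sub1: "L_per k \<alpha> \<subseteq> R" unfolding Lper
    by (rule sigma_ring_gen_min[OF Rsr Rst]) (use kR SolsR in blast)
  have Lsr: "is_subring (L_per k \<alpha>)" unfolding Lper by (rule sigma_ring_gen_subring)
  have kL: "k \<subseteq> L_per k \<alpha>" and SolsL: "Sols \<subseteq> L_per k \<alpha>" unfolding Lper using sigma_ring_gen_sup[of "k \<union> Sols"] by auto
  have PsL: "Ps \<subseteq> L_per k \<alpha>"
  proof
    fix x assume "x \<in> Ps"
    then obtain \<theta> where x: "x = P \<alpha> \<theta>" and tc: "torsion_character \<theta>" unfolding Ps_P by blast
    have ch: "character \<theta>" using tc_char[OF tc] .
    obtain n where n: "n > 0" "\<forall>g. \<theta> g ^ n = 1" using tc unfolding torsion_character_def by blast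
    define s where "s = (\<lambda>x t. 1 * \<theta> (- x) * P \<alpha> \<theta> t)"
    have sol: "is_solution \<alpha> s" unfolding s_def by (rule sol_char[OF ch])
    define H where "H = {y. \<theta> y = 1}"
    have negH: "\<theta> (- y) = 1" if "\<theta> y = 1" for y using char_neg[OF ch, of y] that by simp
    have sgH: "is_subgroup H" unfolding is_subgroup_def H_def
      using char_0[OF ch] char_add[OF ch] negH by auto
    have coset: "(\<lambda>h. g + h) ` H = {x. \<theta> x = \<theta> g}" for g
    proof
      show "(\<lambda>h. g + h) ` H \<subseteq> {x. \<theta> x = \<theta> g}" unfolding H_def using char_add[OF ch] by auto
    next
      show "{x. \<theta> x = \<theta> g} \<subseteq> (\<lambda>h. g + h) ` H"
      proof
        fix x assume "x \<in> {x. \<theta> x = \<theta> g}"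
        then have "\<theta> x = \<theta> g" by simp
        then have "\<theta> (x - g) = 1" using char_add[OF ch, of x "-g"] char_neg[OF ch, of g]
          by (simp add: mult.commute)
        then have "x - g \<in> H" unfolding H_def by simp
        moreover have "x = g + (x - g)" by simp
        ultimately show "x \<in> (\<lambda>h. g + h) ` H" by (rule rev_image_eqI)
      qed
    qed
    have "{(\<lambda>h. g + h) ` H | g. True} \<subseteq> (\<lambda>z. {x. \<theta> x = z}) ` {z. z ^ n = 1}"
      using coset n(2) by auto
    moreover have "finite {z::complex. z ^ n = 1}" using n(1) by (intro finite_roots_unity) auto
    ultimately have fiH: "finite_index H" unfolding finite_index_def
      by (meson finite_imageI finite_subset)
    have perH: "periodic H s" unfolding periodic_def s_def H_def
    proof (intro allI ballI)
      fix g h assume "h \<in> {y. \<theta> y = 1}"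
      then have "\<theta> (- h) = 1" using negH by simp
      then have "\<theta> (- (g + h)) = \<theta> (- g)" using char_add[OF ch, of "-g" "-h"] by (simp add: add.commute)
      then show "(\<lambda>t. 1 * \<theta> (- (g + h)) * P \<alpha> \<theta> t) = (\<lambda>t. 1 * \<theta> (- g) * P \<alpha> \<theta> t)" by simp
    qed
    have "s 0 = P \<alpha> \<theta>" unfolding s_def using char_0[OF ch] by simp
    then have x0: "x = s 0" using x by simp
    have "x \<in> Sols" unfolding Sols_def mem_Collect_eq
      by (rule exI[of _ s], rule exI[of _ 0]) (use x0 sol sgH fiH perH in blast)
    then show "x \<in> L_per k \<alpha>" using SolsL by blast
  qed
  have sub2: "R \<subseteq> L_per k \<alpha>" unfolding R_def by (rule ring_gen_min[OF Lsr]) (use kL PsL in blast)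
  show ?thesis using sub1 sub2 unfolding R_def Ps_def by blast
qed



end
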